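(* Let $\Omega$ be a countable set, $G$ a closed subgroup of $S=\mathrm{Sym}(\Omega)$, and $\Sigma$ a subset of $\Omega$. Then either (i) there exists a finite set $\Gamma\subseteq\Omega$ such that $G_{(\Gamma)}\le S_{(\Sigma)}$, or (ii) there exists an element $g\in G$ which moves infinitely many members of $\Sigma$.
   Context: $\mathrm{Sym}(\Omega)$ is the group of all permutations of $\Omega$, with the function topology (pointwise convergence, $\Omega$ discrete); "closed" means closed in $S$. For $H\le S$ and $\Gamma\subseteq\Omega$, $H_{(\Gamma)}$ is the pointwise stabilizer of $\Gamma$ in $H$. *)

theory Defs
  imports "HOL-Analysis.Analysis" "HOL-Algebra.Bij"
begin

text \<open>Sym(Omega) is modelled by HOL-Algebra's BijGroup Omega (carrier Bij Omega:
  bijections of Omega, extensional outside Omega).\<close>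

definition sym_topology :: "'a set \<Rightarrow> ('a \<Rightarrow> 'a) topology" where
  "sym_topology \<Omega> = subtopology (product_topology (\<lambda>_. discrete_topology \<Omega>) \<Omega>) (Bij \<Omega>)"

definition pointwise_stabilizer :: "('a \<Rightarrow> 'a) set \<Rightarrow> 'a set \<Rightarrow> ('a \<Rightarrow> 'a) set" where
  "pointwise_stabilizer H \<Gamma> = {h \<in> H. \<forall>x\<in>\<Gamma>. h x = x}"

end

theory Submission
  imports Defs
begin

definition nxt :: "('a \<Rightarrow> 'a) set \<Rightarrow> 'a set \<Rightarrow> ('a \<Rightarrow> 'a) \<Rightarrow> 'a set \<Rightarrow> ('a \<Rightarrow> 'a) \<times> 'a" where
  "nxt G S g C = (SOME p. fst p \<in> G \<and> snd p \<in> S \<and> snd p \<notin> C \<and> fst p (snd p) \<noteq> snd p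
                     \<and> (\<forall>x\<in>C. fst p x = g x))"

primrec st :: "'a set \<Rightarrow> ('a \<Rightarrow> 'a) set \<Rightarrow> 'a set \<Rightarrow> (nat \<Rightarrow> 'a) \<Rightarrow> ('a \<Rightarrow> 'a) \<Rightarrow> nat
   \<Rightarrow> ('a \<Rightarrow> 'a) \<times> 'a set" where
  "st W G S e g0 0 = (g0, {})"
| "st W G S e g0 (Suc n) = (let p = nxt G S (fst (st W G S e g0 n)) (snd (st W G S e g0 n)) in
      (fst p, snd (st W G S e g0 n) \<union> {snd p, e n, SOME x. x \<in> W \<and> fst p x = e n}))"

lemma Bij_props:
  assumes "f \<in> Bij W"
  shows "inj_on f W" "f ` W = W" "\<And>x. x \<notin> W \<Longrightarrow> f x = undefined"
  using assms by (auto simp: Bij_def bij_betw_def extensional_def)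

context
  fixes W :: "'a set" and G :: "('a \<Rightarrow> 'a) set" and S :: "'a set" and e :: "nat \<Rightarrow> 'a"
    and g0 :: "'a \<Rightarrow> 'a"
  assumes sub: "subgroup G (BijGroup W)" and g0: "g0 \<in> G" and e: "range e = W" and SW: "S \<subseteq> W"
    and step: "\<And>g C. g \<in> G \<Longrightarrow> finite C \<Longrightarrow> C \<subseteq> W \<Longrightarrow>
        \<exists>g'\<in>G. \<exists>s\<in>S. s \<notin> C \<and> g' s \<noteq> s \<and> (\<forall>x\<in>C. g' x = g x)"
begin

abbreviation "gg n \<equiv> fst (st W G S e g0 n)"
abbreviation "GG n \<equiv> snd (st W G S e g0 n)"
abbreviation "sg n \<equiv> snd (nxt G S (gg n) (GG n))"

lemma GB: "G \<subseteq> Bij W"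
  using subgroup.subset[OF sub] by (simp add: BijGroup_def)

lemma nxt_prop:
  assumes "g \<in> G" "finite C" "C \<subseteq> W"
  shows "fst (nxt G S g C) \<in> G \<and> snd (nxt G S g C) \<in> S \<and> snd (nxt G S g C) \<notin> C
     \<and> fst (nxt G S g C) (snd (nxt G S g C)) \<noteq> snd (nxt G S g C)
     \<and> (\<forall>x\<in>C. fst (nxt G S g C) x = g x)"
proof -
  obtain g' s where "g'\<in>G" "s\<in>S" "s \<notin> C" "g' s \<noteq> s" "\<forall>x\<in>C. g' x = g x"
    using step[OF assms] by blast
  then have "\<exists>p. fst p \<in> G \<and> snd p \<in> S \<and> snd p \<notin> C \<and> fst p (snd p) \<noteq> snd p
                     \<and> (\<forall>x\<in>C. fst p x = g x)" by (intro exI[of _ "(g', s)"]) auto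
  then show ?thesis unfolding nxt_def by (rule someI_ex)
qed

lemma inv_st: "gg n \<in> G \<and> finite (GG n) \<and> GG n \<subseteq> W"
proof (induction n)
  case 0
  then show ?case using g0 by simp
next
  case (Suc n)
  have P: "fst (nxt G S (gg n) (GG n)) \<in> G" "sg n \<in> S"
    using nxt_prop[of "gg n" "GG n"] Suc by auto
  have img: "fst (nxt G S (gg n) (GG n)) ` W = W" by (rule Bij_props(2)[OF subsetD[OF GB P(1)]])
  have "e n \<in> range e" by simp
  then have "e n \<in> W" using e by simp
  then have "e n \<in> fst (nxt G S (gg n) (GG n)) ` W" using img by simp
  then obtain x where "x \<in> W" "e n = fst (nxt G S (gg n) (GG n)) x" by (rule imageE)
  then have "\<exists>x. x \<in> W \<and> fst (nxt G S (gg n) (GG n)) x = e n" by auto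
  then have "(SOME x. x \<in> W \<and> fst (nxt G S (gg n) (GG n)) x = e n) \<in> W"
    by (rule someI2_ex) auto
  moreover have "sg n \<in> W" using P(2) SW by blast
  ultimately show ?case using Suc P e by (auto simp: Let_def)
qed

lemma step_facts:
  "\<forall>x\<in>GG n. gg (Suc n) x = gg n x" "GG n \<subseteq> GG (Suc n)" "sg n \<notin> GG n"
  "sg n \<in> GG (Suc n)" "gg (Suc n) (sg n) \<noteq> sg n" "sg n \<in> S"
  "\<exists>x\<in>GG (Suc n). gg (Suc n) x = e n"
proof -
  let ?p = "nxt G S (gg n) (GG n)"
  have P: "fst ?p \<in> G \<and> snd ?p \<in> S \<and> snd ?p \<notin> GG n
     \<and> fst ?p (snd ?p) \<noteq> snd ?p \<and> (\<forall>x\<in>GG n. fst ?p x = gg n x)"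
    using nxt_prop inv_st by blast
  have img: "fst ?p ` W = W" using P by (intro Bij_props(2)[OF subsetD[OF GB]]) simp
  have "e n \<in> range e" by simp
  then have "e n \<in> W" using e by simp
  then have "e n \<in> fst ?p ` W" using img by simp
  then obtain x where "x \<in> W" "e n = fst ?p x" by (rule imageE)
  then have "\<exists>x. x \<in> W \<and> fst ?p x = e n" by auto
  then have "(SOME x. x \<in> W \<and> fst ?p x = e n) \<in> W \<and> fst ?p (SOME x. x \<in> W \<and> fst ?p x = e n) = e n"
    by (rule someI_ex)
  then show "\<exists>x\<in>GG (Suc n). gg (Suc n) x = e n" by (auto simp: Let_def)
  show "\<forall>x\<in>GG n. gg (Suc n) x = gg n x" "GG n \<subseteq> GG (Suc n)" "sg n \<notin> GG n"
    "sg n \<in> GG (Suc n)" "gg (Suc n) (sg n) \<noteq> sg n" "sg n \<in> S"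
    using P by (auto simp: Let_def)
qed

lemma mono_st: "n \<le> m \<Longrightarrow> GG n \<subseteq> GG m \<and> (\<forall>x\<in>GG n. gg m x = gg n x)"
proof (induction m rule: dec_induct)
  case base
  then show ?case by simp
next
  case (step m)
  then show ?case using step_facts(1,2)[of m] by auto
qed

lemma in_some: "x \<in> W \<Longrightarrow> \<exists>n. x \<in> GG n"
proof -
  assume "x \<in> W"
  then obtain k where "x = e k" using e by blast
  have "e k \<in> GG (Suc k)" by (simp add: Let_def)
  then show ?thesis using \<open>x = e k\<close> by blast
qed

lemma fin_some: "finite F \<Longrightarrow> F \<subseteq> W \<Longrightarrow> \<exists>n. F \<subseteq> GG n"
proof (induction F rule: finite_induct)
  case empty
  then show ?case by simp
next
  case (insert x F)
  then obtain n where n: "F \<subseteq> GG n" by blast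
  obtain m where m: "x \<in> GG m" using in_some insert by blast
  have "GG n \<subseteq> GG (max n m)" "GG m \<subseteq> GG (max n m)" using mono_st by auto
  then show ?case using n m by blast
qed

definition lim :: "'a \<Rightarrow> 'a" where
  "lim x = (if x \<in> W then gg (SOME n. x \<in> GG n) x else undefined)"

lemma lim_eq: "x \<in> GG n \<Longrightarrow> lim x = gg n x"
proof -
  assume x: "x \<in> GG n"
  then have xW: "x \<in> W" using inv_st by blast
  let ?m = "SOME n. x \<in> GG n"
  have m: "x \<in> GG ?m" using x by (rule someI)
  have "gg (max n ?m) x = gg ?m x" "gg (max n ?m) x = gg n x"
    using mono_st[of ?m "max n ?m"] mono_st[of n "max n ?m"] x m by auto
  then show ?thesis using xW by (simp add: lim_def)
qed

lemma lim_Bij: "lim \<in> Bij W"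
proof -
  have ext: "lim \<in> extensional W" by (simp add: lim_def extensional_def)
  have inj: "inj_on lim W"
  proof (rule inj_onI)
    fix x y assume xy: "x \<in> W" "y \<in> W" "lim x = lim y"
    obtain n where n: "{x, y} \<subseteq> GG n" using fin_some[of "{x,y}"] xy by auto
    have "gg n x = gg n y" using xy n lim_eq by auto
    moreover have "inj_on (gg n) W" using Bij_props(1) inv_st GB by blast
    ultimately show "x = y" using xy inj_onD by metis
  qed
  have img1: "lim ` W \<subseteq> W"
  proof
    fix y assume "y \<in> lim ` W"
    then obtain x where x: "x \<in> W" "y = lim x" by blast
    obtain n where n: "x \<in> GG n" using in_some x by blast
    have "gg n ` W = W" using Bij_props(2) inv_st GB by blast
    then show "y \<in> W" using x n lim_eq by auto
  qed
  have img2: "W \<subseteq> lim ` W"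
  proof
    fix y assume "y \<in> W"
    then obtain k where "y = e k" using e by blast
    then obtain x where x: "x \<in> GG (Suc k)" "gg (Suc k) x = y" using step_facts(7) by blast
    then have "x \<in> W" using inv_st by blast
    moreover have "lim x = y" using lim_eq[OF x(1)] x(2) by (rule trans)
    ultimately show "y \<in> lim ` W" by blast
  qed
  show ?thesis using ext inj img1 img2 by (auto simp: Bij_def bij_betw_def)
qed

lemma lim_moves: "infinite {x \<in> S. lim x \<noteq> x}"
proof -
  have inj: "inj (\<lambda>n. sg n)"
  proof (rule injI)
    have *: "m < n \<Longrightarrow> sg m \<noteq> sg n" for m n
      using step_facts(4)[of m] step_facts(3)[of n] mono_st[of "Suc m" n] by auto
    fix m n assume "sg m = sg n"
    then show "m = n" using *[of m n] *[of n m] by (metis linorder_neqE_nat)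
  qed
  have sub: "range (\<lambda>n. sg n) \<subseteq> {x \<in> S. lim x \<noteq> x}"
  proof
    fix y assume "y \<in> range (\<lambda>n. sg n)"
    then obtain n where y: "y = sg n" by blast
    have "lim (sg n) = gg (Suc n) (sg n)" using step_facts(4)[of n] by (rule lim_eq)
    then show "y \<in> {x \<in> S. lim x \<noteq> x}" using y step_facts(5,6)[of n] by simp
  qed
  show ?thesis by (rule infinite_super[OF sub range_inj_infinite[OF inj]])
qed

lemma lim_approx: "finite F \<Longrightarrow> F \<subseteq> W \<Longrightarrow> \<exists>n. \<forall>x\<in>F. gg n x = lim x"
proof -
  assume "finite F" "F \<subseteq> W"
  then obtain n where "F \<subseteq> GG n" using fin_some by blast
  then have "\<forall>x\<in>F. gg n x = lim x" using lim_eq by (metis subsetD)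
  then show ?thesis by blast
qed

lemma exported: "\<exists>g\<in>Bij W. infinite {x \<in> S. g x \<noteq> x} \<and>
   (\<forall>F. finite F \<longrightarrow> F \<subseteq> W \<longrightarrow> (\<exists>h\<in>G. \<forall>x\<in>F. h x = g x))"
proof (rule bexI[of _ lim])
  show "lim \<in> Bij W" by (rule lim_Bij)
  show "infinite {x \<in> S. lim x \<noteq> x} \<and>
   (\<forall>F. finite F \<longrightarrow> F \<subseteq> W \<longrightarrow> (\<exists>h\<in>G. \<forall>x\<in>F. h x = lim x))"
  proof (intro conjI allI impI)
    show "infinite {x \<in> S. lim x \<noteq> x}" by (rule lim_moves)
    fix F assume "finite F" "F \<subseteq> W"
    then obtain n where n: "\<forall>x\<in>F. gg n x = lim x" using lim_approx by blast
    have "gg n \<in> G" using inv_st by blast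
    then show "\<exists>h\<in>G. \<forall>x\<in>F. h x = lim x" using n by blast
  qed
qed

end

theorem corollary11p3:
  fixes \<Omega> :: "'a set" and G :: "('a \<Rightarrow> 'a) set" and \<Sigma> :: "'a set"
  assumes "countable \<Omega>"
    and "subgroup G (BijGroup \<Omega>)"
    and "closedin (sym_topology \<Omega>) G"
    and "\<Sigma> \<subseteq> \<Omega>"
  shows "(\<exists>\<Gamma>. finite \<Gamma> \<and> \<Gamma> \<subseteq> \<Omega> \<and>
            pointwise_stabilizer G \<Gamma> \<subseteq> pointwise_stabilizer (Bij \<Omega>) \<Sigma>)
       \<or> (\<exists>g\<in>G. infinite {x \<in> \<Sigma>. g x \<noteq> x})"
proof (rule ccontr)
  assume nt: "\<not> ?thesis"
  have ni: "\<And>\<Gamma>. finite \<Gamma> \<Longrightarrow> \<Gamma> \<subseteq> \<Omega> \<Longrightarrow>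
     \<not> (pointwise_stabilizer G \<Gamma> \<subseteq> pointwise_stabilizer (Bij \<Omega>) \<Sigma>)"
    using nt by blast
  have nii: "\<And>g. g \<in> G \<Longrightarrow> finite {x \<in> \<Sigma>. g x \<noteq> x}" using nt by blast
  have GB: "G \<subseteq> Bij \<Omega>" using subgroup.subset[OF assms(2)] by (simp add: BijGroup_def)
  have ne: "\<Omega> \<noteq> {}"
  proof
    assume "\<Omega> = {}"
    then have "pointwise_stabilizer G {} \<subseteq> pointwise_stabilizer (Bij \<Omega>) \<Sigma>"
      using GB assms(4) by (auto simp: pointwise_stabilizer_def)
    then show False using ni[of "{}"] by simp
  qed
  define e where "e = from_nat_into \<Omega>"
  have e: "range e = \<Omega>" unfolding e_def using range_from_nat_into[OF ne assms(1)] .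
  have g0: "\<one>\<^bsub>BijGroup \<Omega>\<^esub> \<in> G" using subgroup.one_closed[OF assms(2)] .
  have step: "\<exists>g'\<in>G. \<exists>s\<in>\<Sigma>. s \<notin> C \<and> g' s \<noteq> s \<and> (\<forall>x\<in>C. g' x = g x)"
    if g: "g \<in> G" and C: "finite C" "C \<subseteq> \<Omega>" for g C
  proof -
    obtain h where h: "h \<in> G" "\<forall>x\<in>C. h x = x" "h \<notin> pointwise_stabilizer (Bij \<Omega>) \<Sigma>"
      using ni[OF C] by (auto simp: pointwise_stabilizer_def)
    have hB: "h \<in> Bij \<Omega>" using h GB by blast
    have gB: "g \<in> Bij \<Omega>" using g GB by blast
    obtain s where s: "s \<in> \<Sigma>" "h s \<noteq> s" using h(3) hB by (auto simp: pointwise_stabilizer_def)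
    have sC: "s \<notin> C" using s h(2) by blast
    have sW: "s \<in> \<Omega>" using s assms(4) by blast
    have hsW: "h s \<in> \<Omega>" using Bij_props(2)[OF hB] sW by blast
    show ?thesis
    proof (cases "g (h s) = s")
      case True
      have "g s \<noteq> s"
      proof
        assume "g s = s"
        then have "g (h s) = g s" using True by simp
        then have "h s = s" using inj_onD[OF Bij_props(1)[OF gB]] hsW sW by blast
        then show False using s by simp
      qed
      then show ?thesis using g s sC by blast
    next
      case False
      have "g \<otimes>\<^bsub>BijGroup \<Omega>\<^esub> h \<in> G" using subgroup.m_closed[OF assms(2) g h(1)] .
      moreover have "g \<otimes>\<^bsub>BijGroup \<Omega>\<^esub> h = compose \<Omega> g h"
        using gB hB by (simp add: BijGroup_def)
      ultimately have cG: "compose \<Omega> g h \<in> G" by simp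
      have "compose \<Omega> g h s \<noteq> s" using False sW by (simp add: compose_def)
      moreover have "\<forall>x\<in>C. compose \<Omega> g h x = g x" using h(2) C by (auto simp: compose_def)
      ultimately show ?thesis using cG s sC by blast
    qed
  qed
  obtain g where gB: "g \<in> Bij \<Omega>" and ginf: "infinite {x \<in> \<Sigma>. g x \<noteq> x}"
    and gapp: "\<And>F. finite F \<Longrightarrow> F \<subseteq> \<Omega> \<Longrightarrow> \<exists>h\<in>G. \<forall>x\<in>F. h x = g x"
    using exported[OF assms(2) g0 e assms(4) step] by blast
  define P where "P = product_topology (\<lambda>_. discrete_topology \<Omega>) \<Omega>"
  obtain T where T: "closedin P T" "G = T \<inter> Bij \<Omega>"
    using assms(3) unfolding sym_topology_def P_def closedin_subtopology by blast
  have topP: "topspace P = (\<Pi>\<^sub>E i\<in>\<Omega>. \<Omega>)" by (simp add: P_def)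
  have gP: "g \<in> topspace P" using gB unfolding topP
    by (auto simp: Bij_def bij_betw_def PiE_iff)
  have "g \<in> G"
  proof (rule ccontr)
    assume "g \<notin> G"
    then have gT: "g \<in> topspace P - T" using T(2) gB gP by blast
    have "openin P (topspace P - T)" using T(1) by (simp add: closedin_def)
    then obtain U where U: "finite {i \<in> \<Omega>. U i \<noteq> topspace (discrete_topology \<Omega>)}"
      "g \<in> Pi\<^sub>E \<Omega> U" "Pi\<^sub>E \<Omega> U \<subseteq> topspace P - T"
      using gT unfolding P_def openin_product_topology_alt by blast
    obtain h where h: "h \<in> G" "\<forall>x\<in>{i \<in> \<Omega>. U i \<noteq> \<Omega>}. h x = g x"
      using gapp[of "{i \<in> \<Omega>. U i \<noteq> \<Omega>}"] U(1) by auto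
    have hB: "h \<in> Bij \<Omega>" using h GB by blast
    have "h \<in> Pi\<^sub>E \<Omega> U"
    proof -
      have "h \<in> extensional \<Omega>" using hB by (simp add: Bij_def)
      moreover have "h i \<in> U i" if i: "i \<in> \<Omega>" for i
      proof (cases "U i = \<Omega>")
        case True
        then show ?thesis using Bij_props(2)[OF hB] i by blast
      next
        case False
        then have "h i = g i" using h(2) i by blast
        then show ?thesis using U(2) i by (auto simp: PiE_iff)
      qed
      ultimately show ?thesis by (auto simp: PiE_iff)
    qed
    then show False using U(3) h(1) T(2) by blast
  qed
  then show False using nii ginf by blast
qed

end
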